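(* Let $4 \le r \le n-1$ and let $m \in \{r,r-1,r-2\}$. If $m<n-1$, then \[\sum_{j=0}^{r-1} \binom{m}{j} \binom{n-m-1}{r-j-1} 2^{r-j-1} > 1 + \binom{n-1}{r-1}.\] If $m=n-1$, then \[\sum_{j=0}^{r-1} \binom{m}{j} \binom{n-m-1}{r-j-1} 2^{r-j-1} = \binom{n-1}{r-1}.\]
   Context: Binomial coefficients $\binom{a}{b}$ are $0$ when $b<0$ or $b>a$. *)

theory Defs
  imports Main
begin

end

theory Submission
  imports Defs
begin

lemma choose_ge2:
  assumes "4 \<le> (r::nat)" "r - 1 \<le> m"
  shows "2 \<le> m choose (r - 2)"
proof -
  obtain m' where m': "m = Suc m'" using assms by (cases m) auto
  have rs: "r - 2 = Suc (r - 3)" using assms by simp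
  have "m choose (r - 2) = (m' choose (r - 3)) + (m' choose Suc (r - 3))"
    unfolding m' rs by simp
  moreover have "m' choose (r - 3) \<ge> 1" using assms m' by (simp add: Suc_le_eq)
  moreover have "m' choose Suc (r - 3) \<ge> 1" using assms m' by (simp add: Suc_le_eq)
  ultimately show ?thesis by linarith
qed

theorem lemma9p2:
  fixes n r m :: nat
  assumes "4 \<le> r" and "r \<le> n - 1" and "m \<in> {r, r - 1, r - 2}"
  shows "(m < n - 1 \<longrightarrow>
            (\<Sum>j = 0..r - 1. (m choose j) * ((n - m - 1) choose (r - j - 1)) * 2 ^ (r - j - 1))
              > 1 + ((n - 1) choose (r - 1)))
       \<and> (m = n - 1 \<longrightarrow>
            (\<Sum>j = 0..r - 1. (m choose j) * ((n - m - 1) choose (r - j - 1)) * 2 ^ (r - j - 1))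
              = (n - 1) choose (r - 1))"
proof (intro conjI impI)
  define k where "k = n - m - 1"
  define a where "a j = (m choose j) * (k choose (r - 1 - j))" for j
  have S: "(\<Sum>j = 0..r - 1. (m choose j) * ((n - m - 1) choose (r - j - 1)) * 2 ^ (r - j - 1))
        = (\<Sum>j = 0..r - 1. a j * 2 ^ (r - 1 - j))"
    by (simp add: a_def k_def diff_diff_left add.commute)
  have V: "(\<Sum>j = 0..r - 1. a j) = (m + k) choose (r - 1)"
    unfolding a_def atLeast0AtMost by (rule vandermonde)
  {
    assume lt: "m < n - 1"
    have mk: "m + k = n - 1" using lt by (simp add: k_def)
    have mem: "r - 2 \<in> {0..r - 1}" by simp
    have "(\<Sum>j = 0..r - 1. a j + (if j = r - 2 then a j else 0)) \<le> (\<Sum>j = 0..r - 1. a j * 2 ^ (r - 1 - j))"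
    proof (rule sum_mono)
      fix j assume j: "j \<in> {0..r - 1}"
      show "a j + (if j = r - 2 then a j else 0) \<le> a j * 2 ^ (r - 1 - j)"
      proof (cases "j = r - 2")
        case True
        then have "r - 1 - j = 1" using assms by simp
        then show ?thesis using True by simp
      next
        case False
        have "a j * 1 \<le> a j * 2 ^ (r - 1 - j)" by (intro mult_le_mono2) simp
        then show ?thesis using False by simp
      qed
    qed
    also note S[symmetric]
    finally have ge0: "(\<Sum>j = 0..r - 1. a j + (if j = r - 2 then a j else 0)) \<le> (\<Sum>j = 0..r - 1. (m choose j) * ((n - m - 1) choose (r - j - 1)) * 2 ^ (r - j - 1))" .
    have "(\<Sum>j = 0..r - 1. a j + (if j = r - 2 then a j else 0)) = (\<Sum>j = 0..r - 1. a j) + a (r - 2)"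
      by (simp only: sum.distrib sum.delta finite_atLeastAtMost if_True mem)
    then have ge: "(n - 1 choose (r - 1)) + a (r - 2) \<le> (\<Sum>j = 0..r - 1. (m choose j) * ((n - m - 1) choose (r - j - 1)) * 2 ^ (r - j - 1))"
      using ge0 V mk by simp
    have ar: "a (r - 2) = (m choose (r - 2)) * k"
      using assms by (simp add: a_def)
    have "2 \<le> a (r - 2)"
    proof (cases "m = r - 2")
      case True
      then have "k \<ge> 2" using assms lt by (simp add: k_def)
      then show ?thesis using ar True by simp
    next
      case False
      then have "r - 1 \<le> m" using assms by auto
      then have "2 \<le> m choose (r - 2)" using choose_ge2 assms by blast
      moreover have "k \<ge> 1" using lt by (simp add: k_def)
      ultimately show ?thesis using ar
        by (metis mult.right_neutral mult_le_mono)
    qed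
    then show "(\<Sum>j = 0..r - 1. (m choose j) * ((n - m - 1) choose (r - j - 1)) * 2 ^ (r - j - 1))
              > 1 + ((n - 1) choose (r - 1))" using ge by linarith
  }
  {
    assume eq: "m = n - 1"
    have k0: "k = 0" using eq by (simp add: k_def)
    have "(\<Sum>j = 0..r - 1. a j * 2 ^ (r - 1 - j)) = (\<Sum>j = 0..r - 1. a j)"
    proof (rule sum.cong)
      fix j assume j: "j \<in> {0..r - 1}"
      show "a j * 2 ^ (r - 1 - j) = a j"
      proof (cases "j = r - 1")
        case True then show ?thesis by simp
      next
        case False then have "r - 1 - j > 0" using j by auto
        then show ?thesis by (simp add: a_def k0)
      qed
    qed simp
    then show "(\<Sum>j = 0..r - 1. (m choose j) * ((n - m - 1) choose (r - j - 1)) * 2 ^ (r - j - 1))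
              = (n - 1) choose (r - 1)"
    proof -
      have mk: "m + k = n - 1" using eq k0 by simp
      note S
      also note \<open>(\<Sum>j = 0..r - 1. a j * 2 ^ (r - 1 - j)) = (\<Sum>j = 0..r - 1. a j)\<close>
      also note V
      also note mk
      finally show ?thesis .
    qed
  }
qed

end
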